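(* Let $\mathfrak g$ be of type $A_n$, $B_n$ or $D_n$, $i\in I$ and $b\in\mathcal B(\infty)$, and let $\sigma_i^\ast(b)=\max\{\Sigma^\ast_\tau(b):\tau\in\Pi_i^\ast\}$. If $\sigma_i^\ast(b)=\Sigma^\ast_\lambda(b)=\Sigma^\ast_\mu(b)$ for some $\lambda,\mu\in\Pi_i^\ast$, then $\sigma_i^\ast(b)=\Sigma^\ast_{\lambda\cup\mu}(b)=\Sigma^\ast_{\lambda\cap\mu}(b)$.
   Context: $I=\{1,\dots,n\}$, Cartan integers $a_{ij}$: $a_{ii}=2$; for $i\ne j$: type $A_n$: $a_{ij}=-1$ if $|i-j|=1$, else $0$; type $B_n$: same but $a_{n,n-1}=-2$; type $D_n$ ($n\ge4$): $a_{ij}=-1$ iff $\{i,j\}=\{k,k+1\}$, $k\le n-2$, or $\{i,j\}=\{n-2,n\}$, else $0$. Index sets $\mathcal I^A=\{(s,t):s+t\le n+1\}$, $\mathcal I^B=\{(s,t):1\le s\le n\}$, $\mathcal I^D=\{(s,t):1\le s\le n-1\}$ ($s\ge1$, $t\in I$). $\mathcal B(\infty)\subset\mathbb Z_{\ge0}^{\mathcal I}$ is the polyhedral realization of $B(\infty)$ for the sequence $(\dots,n,\dots,1,n,\dots,1)$ (explicitly: type $A$: $b_{1,k}\ge b_{2,k-1}\ge\dots\ge b_{k,1}$, $1\le k\le n$; types $B,D$: analogous known inequalities); only the following is needed. Convention $b_{s,t}=0$ for $(s,t)\notin\mathcal I$. $\partial^\ast_{s,t}(b)=b_{s-1,t}+\sum_{k>t}a_{tk}b_{s-1,k}+\sum_{k<t}a_{tk}b_{s,k}+b_{s,t}$.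 Tableaux $T_i^\ast$: for $i\le n$ (type $A$), $i\le n-1$ (type $B$), $i\le n-2$ (type $D$), shape $(i)$ with $T_i^\ast(1,t)=\partial^\ast_{t,i+1-t}$; type $B_n$: $T_n^\ast$ of shape $(n,n-1,\dots,1)$ with $T_n^\ast(s,t)=2\partial^\ast_{s+t-1,n-t}$ ($t\ge2$), $T_n^\ast(s,1)=\partial^\ast_{s,n}$; type $D_n$: $T_{n-1}^\ast,T_n^\ast$ of shape $(n-1,\dots,1)$ with $T(s,t)=\partial^\ast_{s+t-1,n-t}$ ($t\ge2$), $T^\ast_{n-1}(s,1)=\partial^\ast_{s,n-1}$ for odd $s$ and $\partial^\ast_{s,n}$ for even $s$, $T_n^\ast(s,1)$ the same with $n-1,n$ swapped. $\Pi_i^\ast$: nonempty strict partitions with diagram contained in the shape of $T_i^\ast$. $\Sigma^\ast_\lambda(b)=\sum_{(s,t)\in\lambda}T_i^\ast(s,t)(b)$. For partitions, $\lambda\cup\mu=(\max(\lambda_k,\mu_k))_k$, $\lambda\cap\mu=(\min(\lambda_k,\mu_k))_k$. *)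

theory Defs
  imports Main
begin

datatype lie_type = TypeA | TypeB | TypeD

definition valid_rank :: "lie_type \<Rightarrow> nat \<Rightarrow> bool" where
  "valid_rank ty n = (case ty of TypeD \<Rightarrow> 4 \<le> n | _ \<Rightarrow> 1 \<le> n)"

definition cartan :: "lie_type \<Rightarrow> nat \<Rightarrow> nat \<Rightarrow> nat \<Rightarrow> int" where
  "cartan ty n i j =
    (if i = j then 2 else
     (case ty of
        TypeA \<Rightarrow> (if i + 1 = j \<or> j + 1 = i then -1 else 0)
      | TypeB \<Rightarrow> (if i = n \<and> j + 1 = n then -2
                  else if i + 1 = j \<or> j + 1 = i then -1 else 0)
      | TypeD \<Rightarrow> (if ({i, j} = {n - 2, n}) \<or>
                     (\<exists>k. 1 \<le> k \<and> k \<le> n - 2 \<and> {i, j} = {k, k + 1})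
                  then -1 else 0)))"

definition in_idx :: "lie_type \<Rightarrow> nat \<Rightarrow> nat \<times> nat \<Rightarrow> bool" where
  "in_idx ty n st = (case st of (s, t) \<Rightarrow>
      1 \<le> s \<and> 1 \<le> t \<and> t \<le> n \<and>
      (case ty of TypeA \<Rightarrow> s + t \<le> n + 1 | TypeB \<Rightarrow> s \<le> n | TypeD \<Rightarrow> s \<le> n - 1))"

definition bval :: "lie_type \<Rightarrow> nat \<Rightarrow> (nat \<Rightarrow> nat \<Rightarrow> int) \<Rightarrow> nat \<Rightarrow> nat \<Rightarrow> int" where
  "bval ty n b s t = (if in_idx ty n (s, t) then b s t else 0)"

definition pstar :: "lie_type \<Rightarrow> nat \<Rightarrow> nat \<Rightarrow> nat \<Rightarrow> (nat \<Rightarrow> nat \<Rightarrow> int) \<Rightarrow> int" where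
  "pstar ty n s t b =
     bval ty n b (s - 1) t
     + (\<Sum>k\<in>{t<..n}. cartan ty n t k * bval ty n b (s - 1) k)
     + (\<Sum>k\<in>{1..<t}. cartan ty n t k * bval ty n b s k)
     + bval ty n b s t"

text \<open>Entries T*_i(s,t) of the tableaux (rows s, columns t, 1-indexed).\<close>
definition Tstar :: "lie_type \<Rightarrow> nat \<Rightarrow> nat \<Rightarrow> nat \<Rightarrow> nat \<Rightarrow> (nat \<Rightarrow> nat \<Rightarrow> int) \<Rightarrow> int" where
  "Tstar ty n i s t b =
    (if ty = TypeA \<or> (ty = TypeB \<and> i \<le> n - 1) \<or> (ty = TypeD \<and> i \<le> n - 2)
     then pstar ty n t (i + 1 - t) b
     else if ty = TypeB then
       (if 2 \<le> t then 2 * pstar ty n (s + t - 1) (n - t) b else pstar ty n s n b)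
     else
       (if 2 \<le> t then pstar ty n (s + t - 1) (n - t) b
        else if (odd s \<longleftrightarrow> i = n - 1) then pstar ty n s (n - 1) b
        else pstar ty n s n b))"

text \<open>Partitions as lists of (positive) parts; row s (1-indexed) has length \<lambda>!(s-1).\<close>
definition part :: "nat list \<Rightarrow> nat \<Rightarrow> nat" where
  "part la k = (if k < length la then la ! k else 0)"

definition strict_partition :: "nat list \<Rightarrow> bool" where
  "strict_partition la = (sorted_wrt (>) la \<and> (\<forall>x\<in>set la. 0 < x))"

definition cells :: "nat list \<Rightarrow> (nat \<times> nat) set" where
  "cells la = {(s, t). 1 \<le> s \<and> s \<le> length la \<and> 1 \<le> t \<and> t \<le> la ! (s - 1)}"

definition part_union :: "nat list \<Rightarrow> nat list \<Rightarrow> nat list" where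
  "part_union la mu = map (\<lambda>k. max (part la k) (part mu k)) [0..<max (length la) (length mu)]"

definition part_inter :: "nat list \<Rightarrow> nat list \<Rightarrow> nat list" where
  "part_inter la mu = map (\<lambda>k. min (part la k) (part mu k)) [0..<min (length la) (length mu)]"

definition shape :: "lie_type \<Rightarrow> nat \<Rightarrow> nat \<Rightarrow> nat list" where
  "shape ty n i =
    (if ty = TypeA \<or> (ty = TypeB \<and> i \<le> n - 1) \<or> (ty = TypeD \<and> i \<le> n - 2) then [i]
     else if ty = TypeB then rev [1..<n + 1]
     else rev [1..<n])"

definition Pi_star :: "lie_type \<Rightarrow> nat \<Rightarrow> nat \<Rightarrow> nat list set" where
  "Pi_star ty n i = {la. la \<noteq> [] \<and> strict_partition la \<and> cells la \<subseteq> cells (shape ty n i)}"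

definition Sigma_star :: "lie_type \<Rightarrow> nat \<Rightarrow> nat \<Rightarrow> nat list \<Rightarrow> (nat \<Rightarrow> nat \<Rightarrow> int) \<Rightarrow> int" where
  "Sigma_star ty n i la b = (\<Sum>(s, t)\<in>cells la. Tstar ty n i s t b)"

definition sigma_star :: "lie_type \<Rightarrow> nat \<Rightarrow> nat \<Rightarrow> (nat \<Rightarrow> nat \<Rightarrow> int) \<Rightarrow> int" where
  "sigma_star ty n i b = Max ((\<lambda>\<tau>. Sigma_star ty n i \<tau> b) ` Pi_star ty n i)"

end

theory Submission
  imports Defs
begin

lemma cells_eq: "cells la = (SIGMA s:{1..length la}. {1..la ! (s - 1)})"
  unfolding cells_def by auto

lemma finite_cells: "finite (cells la)"
  unfolding cells_eq by auto

lemma cells_part: "cells la = {(s, t). 1 \<le> s \<and> 1 \<le> t \<and> t \<le> part la (s - 1)}"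
  unfolding cells_def part_def by (auto split: if_splits)

lemma cells_union: "cells (part_union la mu) = cells la \<union> cells mu"
  unfolding cells_part by (auto simp: part_union_def part_def split: if_splits)

lemma cells_inter: "cells (part_inter la mu) = cells la \<inter> cells mu"
  unfolding cells_part by (auto simp: part_inter_def part_def split: if_splits)

lemma sp_pos: "strict_partition la \<Longrightarrow> k < length la \<Longrightarrow> 0 < part la k"
  unfolding strict_partition_def part_def by auto

lemma sp_less: "strict_partition la \<Longrightarrow> i < j \<Longrightarrow> j < length la \<Longrightarrow> part la j < part la i"
  unfolding strict_partition_def part_def by (auto simp: sorted_wrt_iff_nth_less)

lemma sp_zero: "j \<ge> length la \<Longrightarrow> part la j = 0"
  unfolding part_def by auto

lemma sp_mono: "strict_partition la \<Longrightarrow> i < j \<Longrightarrow> part la j = 0 \<or> part la j < part la i"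
  using sp_less sp_zero by (metis not_le)

lemma sp_union: assumes "strict_partition la" "strict_partition mu"
  shows "strict_partition (part_union la mu)"
proof -
  have "max (part la j) (part mu j) < max (part la i) (part mu i)"
    if "i < j" "j < max (length la) (length mu)" for i j
  proof (cases "j < length la")
    case True
    then show ?thesis using sp_less[OF assms(1) that(1) True] sp_mono[OF assms(2) that(1)] by auto
  next
    case False
    then have "j < length mu" using that by auto
    then show ?thesis using sp_less[OF assms(2) that(1)] sp_mono[OF assms(1) that(1)] by auto
  qed
  moreover have "0 < max (part la k) (part mu k)" if "k < max (length la) (length mu)" for k
  proof (cases "k < length la")
    case True then show ?thesis using sp_pos[OF assms(1) True] by simp
  next
    case False then have "k < length mu" using that by simp
    then show ?thesis using sp_pos[OF assms(2)] by fastforce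
  qed
  ultimately show ?thesis
    unfolding strict_partition_def part_union_def
    by (auto simp: sorted_wrt_iff_nth_less in_set_conv_nth)
qed

lemma sp_inter: assumes "strict_partition la" "strict_partition mu"
  shows "strict_partition (part_inter la mu)"
proof -
  have "min (part la j) (part mu j) < min (part la i) (part mu i)"
    if "i < j" "j < min (length la) (length mu)" for i j
    using sp_less[OF assms(1) that(1)] sp_less[OF assms(2) that(1)] that by auto
  moreover have "0 < min (part la k) (part mu k)" if "k < min (length la) (length mu)" for k
    using that sp_pos[OF assms(1)] sp_pos[OF assms(2)] by auto
  ultimately show ?thesis
    unfolding strict_partition_def part_inter_def
    by (auto simp: sorted_wrt_iff_nth_less in_set_conv_nth)
qed

lemma Pi_finite: "finite (Pi_star ty n i)"
proof -
  let ?sh = "shape ty n i"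
  have "Pi_star ty n i \<subseteq> {xs. set xs \<subseteq> snd ` cells ?sh \<and> length xs \<le> length ?sh}"
  proof
    fix la assume "la \<in> Pi_star ty n i"
    then have ne: "la \<noteq> []" and sp: "strict_partition la" and sub: "cells la \<subseteq> cells ?sh"
      unfolding Pi_star_def by auto
    have "x \<in> snd ` cells ?sh" if "x \<in> set la" for x
    proof -
      obtain k where k: "k < length la" "la ! k = x" using \<open>x \<in> set la\<close> by (auto simp: in_set_conv_nth)
      have "(Suc k, x) \<in> cells la" using k sp that unfolding cells_def strict_partition_def by auto
      then show ?thesis using sub by force
    qed
    moreover have "length la \<le> length ?sh"
    proof -
      have "0 < la ! (length la - 1)" using sp ne unfolding strict_partition_def by auto
      moreover have "1 \<le> length la" using ne by (cases la) auto
      ultimately have "(length la, 1) \<in> cells la" unfolding cells_def by auto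
      then show ?thesis using sub unfolding cells_def by auto
    qed
    ultimately show "la \<in> {xs. set xs \<subseteq> snd ` cells ?sh \<and> length xs \<le> length ?sh}" by auto
  qed
  moreover have "finite {xs. set xs \<subseteq> snd ` cells ?sh \<and> length xs \<le> length ?sh}"
    by (rule finite_lists_length_le) (simp add: finite_cells)
  ultimately show ?thesis by (rule finite_subset)
qed

lemma Sigma_le: "\<tau> \<in> Pi_star ty n i \<Longrightarrow> Sigma_star ty n i \<tau> b \<le> sigma_star ty n i b"
  unfolding sigma_star_def using Pi_finite by (intro Max_ge) auto

theorem lemma3p7:
  fixes ty :: lie_type and n i :: nat and b :: "nat \<Rightarrow> nat \<Rightarrow> int"
    and la mu :: "nat list"
  assumes "valid_rank ty n"
    and "1 \<le> i" and "i \<le> n"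
    and "\<forall>s t. in_idx ty n (s, t) \<longrightarrow> 0 \<le> b s t"
    and "la \<in> Pi_star ty n i" and "mu \<in> Pi_star ty n i"
    and "sigma_star ty n i b = Sigma_star ty n i la b"
    and "sigma_star ty n i b = Sigma_star ty n i mu b"
  shows "sigma_star ty n i b = Sigma_star ty n i (part_union la mu) b
       \<and> sigma_star ty n i b = Sigma_star ty n i (part_inter la mu) b"
proof -
  from assms(5,6) have la: "la \<noteq> []" "strict_partition la" "cells la \<subseteq> cells (shape ty n i)"
    and mu: "mu \<noteq> []" "strict_partition mu" "cells mu \<subseteq> cells (shape ty n i)"
    unfolding Pi_star_def by auto
  have U: "part_union la mu \<in> Pi_star ty n i"
    unfolding Pi_star_def using la mu sp_union cells_union
    by (auto simp: part_union_def)
  have I: "part_inter la mu \<in> Pi_star ty n i"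
    unfolding Pi_star_def using la mu sp_inter cells_inter
    by (auto simp: part_inter_def)
  have add: "Sigma_star ty n i (part_union la mu) b + Sigma_star ty n i (part_inter la mu) b
      = Sigma_star ty n i la b + Sigma_star ty n i mu b"
    unfolding Sigma_star_def cells_union cells_inter
    by (rule sum.union_inter) (simp_all add: finite_cells)
  show ?thesis using add Sigma_le[OF U, of b] Sigma_le[OF I, of b] assms(7,8) by linarith
qed

end
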